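(* Let $\mathcal N=\{N_1,\ldots,N_\ell\}$ ($\ell\ge4$) be a family of $k$-sets satisfying properties (i) and (ii) below, and fix any run of the decomposition process described in the context. Let $0\le j\le t$, $1\le i\le\ell_j$, and $Y\subseteq N_i$ with $|Y|\le j$. Then there exists a private pair $p\subseteq N_i\setminus Y$ for $N_i$ at time $j$ such that either $p$ is a subset of some $3$-element set $C\subseteq\bigl(N_i\cup\{a_i^{(0)},\dots,a_i^{(j)}\}\bigr)\setminus Y$ satisfying $C\cap(V\setminus N_r)\neq\varnothing$ for all $r=1,\dots,\ell$, or $p$ contains a vertex that is private for $N_i$ at time $j$.
   Context: Setting: $k\ge3$, $\mathcal N=\{N_1,\dots,N_\ell\}$ a family of $k$-subsets, $V=\bigcup N_i$, $n=|V|$, $m=n-k$, satisfying (i) $\bigcap_{i}N_i=\varnothing$ but $\bigcap_{j\ne i}N_j\ne\varnothing$ for all $i$; (ii) every $S\subseteq V$ with $|S|\ge k+1$ contains a $3$-set $T$ not contained in any $N_i$. Assume $\ell\ge4$. Decomposition process: Stage $0$: $\ell_0=\ell$; for each $i\le\ell_0$ choose $a_i^{(0)}\in\bigcap_{r\ne i}N_r$; kernel $A^{(0)}=\{a_1^{(0)},\dots,a_{\ell_0}^{(0)}\}$. Having defined stages $0,\dots,j$ (with surviving sets $N_1,\dots,N_{\ell_j}$, $\ell_j\ge4$, and kernels $A^{(0)},\dots,A^{(j)}$), consider $R^{(j)}=\{N_r\setminus\bigcup_{s\le j}A^{(s)} : r\le\ell_j\}$, which has empty intersection. If every subfamily of $R^{(j)}$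 minimal with respect to having empty intersection has only $2$ or $3$ members, stop and set $t=j$. Otherwise choose such a minimal subfamily with at least $4$ members; after reindexing assume it consists of the truncations $N_r^{(j+1)}=N_r\setminus\bigcup_{s\le j}A^{(s)}$, $r\le\ell_{j+1}$; choose $a_i^{(j+1)}\in\bigcap_{r\le\ell_{j+1},r\ne i}N_r^{(j+1)}$ for $i\le\ell_{j+1}$, and let $A^{(j+1)}$ be the set of these. Privacy: for $i\le\ell_j$, a vertex $v\in N_i$ is private for $N_i$ at time $j$ if no $N_r$ with $r\le\ell_j$, $r\ne i$, contains $v$; a $2$-set $p\subseteq N_i$ is a private pair for $N_i$ at time $j$ if no $N_r$ with $r\le\ell_j$, $r\neq i$, contains $p$. *)

theory Defs
  imports Main
begin

text \<open>A run of the
decomposition process is encoded without reindexing: I j is the set of (original)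
indices of the sets surviving at stage j (so l_j = card (I j)), and a j i is the
kernel vertex a_i^(j) chosen for the set N i at stage j (i in I j).\<close>

definition kernel :: "(nat \<Rightarrow> nat set) \<Rightarrow> (nat \<Rightarrow> nat \<Rightarrow> 'a) \<Rightarrow> nat \<Rightarrow> 'a set" where
  "kernel I a s = a s ` I s"

definition trunc :: "(nat \<Rightarrow> 'a set) \<Rightarrow> (nat \<Rightarrow> nat set) \<Rightarrow> (nat \<Rightarrow> nat \<Rightarrow> 'a) \<Rightarrow> nat \<Rightarrow> nat \<Rightarrow> 'a set" where
  "trunc N I a j r = N r - (\<Union>s\<le>j. kernel I a s)"

definition min_empty_subfam :: "(nat \<Rightarrow> 'a set) \<Rightarrow> nat set \<Rightarrow> nat set \<Rightarrow> bool" where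
  "min_empty_subfam F I J \<longleftrightarrow> J \<subseteq> I \<and> J \<noteq> {} \<and> \<Inter>(F ` J) = {} \<and>
      (\<forall>i\<in>J. \<Inter>(F ` (J - {i})) \<noteq> {})"

definition decomp_run ::
  "(nat \<Rightarrow> 'a set) \<Rightarrow> nat \<Rightarrow> (nat \<Rightarrow> nat set) \<Rightarrow> (nat \<Rightarrow> nat \<Rightarrow> 'a) \<Rightarrow> nat \<Rightarrow> bool" where
  "decomp_run N l I a t \<longleftrightarrow>
     I 0 = {1..l} \<and>
     (\<forall>i\<in>I 0. a 0 i \<in> \<Inter>(N ` (I 0 - {i}))) \<and>
     (\<forall>j<t. min_empty_subfam (trunc N I a j) (I j) (I (Suc j)) \<and> card (I (Suc j)) \<ge> 4 \<and>
        (\<forall>i\<in>I (Suc j). a (Suc j) i \<in> \<Inter>(trunc N I a j ` (I (Suc j) - {i})))) \<and>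
     (\<forall>J. min_empty_subfam (trunc N I a t) (I t) J \<longrightarrow> card J = 2 \<or> card J = 3)"

definition private_vertex :: "(nat \<Rightarrow> 'a set) \<Rightarrow> (nat \<Rightarrow> nat set) \<Rightarrow> nat \<Rightarrow> nat \<Rightarrow> 'a \<Rightarrow> bool" where
  "private_vertex N I j i v \<longleftrightarrow> v \<in> N i \<and> (\<forall>r\<in>I j - {i}. v \<notin> N r)"

definition private_pair :: "(nat \<Rightarrow> 'a set) \<Rightarrow> (nat \<Rightarrow> nat set) \<Rightarrow> nat \<Rightarrow> nat \<Rightarrow> 'a set \<Rightarrow> bool" where
  "private_pair N I j i p \<longleftrightarrow> card p = 2 \<and> p \<subseteq> N i \<and> (\<forall>r\<in>I j - {i}. \<not> p \<subseteq> N r)"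

end

theory Submission
  imports Defs
begin

lemma run_mono:
  assumes run: "decomp_run N l I a t" shows "s \<le> j \<Longrightarrow> j \<le> t \<Longrightarrow> I j \<subseteq> I s"
proof (induction j)
  case 0 then show ?case by simp
next
  case (Suc j)
  show ?case
  proof (cases "s = Suc j")
    case True then show ?thesis by simp
  next
    case False
    then have "s \<le> j" using Suc.prems by simp
    moreover have "I (Suc j) \<subseteq> I j" using run Suc.prems
      unfolding decomp_run_def min_empty_subfam_def by auto
    ultimately show ?thesis using Suc by auto
  qed
qed

lemma run_sub: "decomp_run N l I a t \<Longrightarrow> s \<le> t \<Longrightarrow> I s \<subseteq> {1..l}"
  using run_mono[of N l I a t 0 s] unfolding decomp_run_def by auto

lemma run_card: "decomp_run N l I a t \<Longrightarrow> 4 \<le> l \<Longrightarrow> s \<le> t \<Longrightarrow> 4 \<le> card (I s)"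
  by (cases s) (auto simp: decomp_run_def)

lemma run_mem:
  assumes run: "decomp_run N l I a t" and "s \<le> t" "i \<in> I s" "r \<in> I s" "r \<noteq> i"
  shows "a s i \<in> N r \<and> (\<forall>s'<s. a s i \<notin> kernel I a s')"
proof (cases s)
  case 0
  then show ?thesis using run assms unfolding decomp_run_def by auto
next
  case (Suc s0)
  then have "s0 < t" using assms by simp
  then have "a s i \<in> trunc N I a s0 r" using run assms Suc unfolding decomp_run_def by auto
  then show ?thesis using Suc unfolding trunc_def by auto
qed

lemma exists_other: "4 \<le> card X \<Longrightarrow> finite F \<Longrightarrow> card F < card X \<Longrightarrow> \<exists>r\<in>X. r \<notin> F"
  by (metis card_mono not_le subsetI)

lemma run_notin:
  assumes run: "decomp_run N l I a t" and l4: "4 \<le> l" and e: "(\<Inter>r\<in>{1..l}. N r) = {}"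
    and s: "s \<le> t" and i: "i \<in> I s"
  shows "a s i \<notin> N i"
proof (cases s)
  case 0
  then have "a s i \<in> N r" if "r \<in> {1..l}" "r \<noteq> i" for r
    using run that i 0 unfolding decomp_run_def by auto
  have I0: "I 0 = {1..l}" using run unfolding decomp_run_def by simp
  show ?thesis
  proof
    assume h: "a s i \<in> N i"
    have "a s i \<in> (\<Inter>r\<in>{1..l}. N r)"
    proof
      fix r assume "r \<in> {1..l}"
      then show "a s i \<in> N r" using h \<open>\<And>r. r \<in> {1..l} \<Longrightarrow> r \<noteq> i \<Longrightarrow> a s i \<in> N r\<close> by (cases "r = i") auto
    qed
    then show False using e by (simp only:) simp
  qed
next
  case (Suc s0)
  then have s0: "s0 < t" using s by simp
  have emp: "\<Inter>(trunc N I a s0 ` I s) = {}" using run s0 Suc unfolding decomp_run_def min_empty_subfam_def by auto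
  have mem: "a s i \<in> trunc N I a s0 r" if "r \<in> I s - {i}" for r
    using run s0 Suc that i unfolding decomp_run_def by auto
  obtain r where r: "r \<in> I s" "r \<notin> {i}" using exists_other[of "I s" "{i}"] run_card[OF run l4 s] by auto
  have nk: "\<forall>s'<s. a s i \<notin> kernel I a s'" using run_mem[OF run s i r(1)] r by auto
  show ?thesis
  proof
    assume "a s i \<in> N i"
    then have "a s i \<in> trunc N I a s0 i" using nk Suc unfolding trunc_def by auto
    then have "a s i \<in> \<Inter>(trunc N I a s0 ` I s)" using mem by auto
    then show False using emp by simp
  qed
qed

lemma run_inj:
  assumes run: "decomp_run N l I a t" and l4: "4 \<le> l" and j: "j \<le> t" and i: "i \<in> I j"
  shows "inj_on (\<lambda>s. a s i) {..j}"
proof -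
  have ne: "a s i \<noteq> a s' i" if "s < s'" "s' \<le> j" for s s'
  proof -
    have "I j \<subseteq> I s'" "I j \<subseteq> I s" using run_mono[OF run] that j by auto
    then have is': "i \<in> I s'" and is0: "i \<in> I s" using i by auto
    have s't: "s' \<le> t" using that j by simp
    obtain r where r: "r \<in> I s'" "r \<notin> {i}" using exists_other[of "I s'" "{i}"] run_card[OF run l4 s't] by auto
    have "a s' i \<notin> kernel I a s" using run_mem[OF run s't is' r(1)] r that by auto
    moreover have "a s i \<in> kernel I a s" using is0 unfolding kernel_def by auto
    ultimately show ?thesis by metis
  qed
  show ?thesis
  proof (rule inj_onI)
    fix x y assume "x \<in> {..j}" "y \<in> {..j}" "a x i = a y i"
    then show "x = y" using ne by (metis atMost_iff linorder_neqE_nat)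
  qed
qed

theorem lemma5:
  fixes N :: "nat \<Rightarrow> 'a set" and k l t j i :: nat and V Y :: "'a set"
    and I :: "nat \<Rightarrow> nat set" and a :: "nat \<Rightarrow> nat \<Rightarrow> 'a"
  assumes k3: "k \<ge> 3" and l4: "l \<ge> 4"
    and ksets: "\<forall>r\<in>{1..l}. finite (N r) \<and> card (N r) = k"
    and V_def: "V = (\<Union>r\<in>{1..l}. N r)"
    and prop_i1: "(\<Inter>r\<in>{1..l}. N r) = {}"
    and prop_i2: "\<forall>i'\<in>{1..l}. (\<Inter>r\<in>{1..l} - {i'}. N r) \<noteq> {}"
    and prop_ii: "\<forall>S. S \<subseteq> V \<and> card S \<ge> k + 1 \<longrightarrow>
                    (\<exists>T\<subseteq>S. card T = 3 \<and> (\<forall>r\<in>{1..l}. \<not> T \<subseteq> N r))"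
    and run: "decomp_run N l I a t"
    and jt: "j \<le> t" and iI: "i \<in> I j"
    and YN: "Y \<subseteq> N i" and Ycard: "card Y \<le> j"
  shows "\<exists>p. private_pair N I j i p \<and> p \<subseteq> N i - Y \<and>
           ((\<exists>C. card C = 3 \<and> p \<subseteq> C \<and> C \<subseteq> (N i \<union> {a s i | s. s \<le> j}) - Y \<and>
                 (\<forall>r\<in>{1..l}. C \<inter> (V - N r) \<noteq> {}))
            \<or> (\<exists>v\<in>p. private_vertex N I j i v))"
proof -
  define A where "A = (\<lambda>s. a s i) ` {..j}"
  have Ijl: "I j \<subseteq> {1..l}" using run_sub[OF run jt] .
  have il: "i \<in> {1..l}" using Ijl iI by auto
  have finNi: "finite (N i)" and cardNi: "card (N i) = k" using ksets il by auto
  have cIj: "4 \<le> card (I j)" using run_card[OF run l4 jt] .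
  have AN: "A \<subseteq> N r" if "r \<in> I j - {i}" for r
  proof
    fix x assume "x \<in> A"
    then obtain s where s: "s \<le> j" "x = a s i" unfolding A_def by auto
    have "I j \<subseteq> I s" using run_mono[OF run] s jt by auto
    then show "x \<in> N r" using run_mem[OF run _ _ _, of s i r] s that iI jt by auto
  qed
  have ANi: "A \<inter> N i = {}"
  proof -
    { fix s assume s: "s \<le> j"
      have "I j \<subseteq> I s" using run_mono[OF run] s jt by auto
      then have "a s i \<notin> N i" using run_notin[OF run l4 prop_i1, of s i] s jt iI by auto }
    then show ?thesis unfolding A_def by auto
  qed
  have cardA: "card A = j + 1" unfolding A_def
    using card_image[OF run_inj[OF run l4 jt iI]] by simp
  obtain r0 where r0: "r0 \<in> I j" "r0 \<notin> {i}" using exists_other[of "I j" "{i}"] cIj by auto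
  have AV: "A \<subseteq> V" using AN[of r0] r0 Ijl V_def by auto
  have NiV: "N i \<subseteq> V" using il V_def by auto
  define S where "S = (N i - Y) \<union> A"
  have SV: "S \<subseteq> V" using AV NiV S_def by auto
  have finY: "finite Y" using finNi YN finite_subset by auto
  have cND: "card (N i - Y) = k - card Y" using card_Diff_subset[OF finY YN] cardNi by simp
  have "card S = card (N i - Y) + card A" unfolding S_def
    using ANi finNi cardA by (intro card_Un_disjoint) (auto simp: card_ge_0_finite)
  then have cS: "card S \<ge> k + 1" using cND cardA Ycard by linarith
  have "\<exists>T\<subseteq>S. card T = 3 \<and> (\<forall>r\<in>{1..l}. \<not> T \<subseteq> N r)"
    using prop_ii[rule_format, of S] SV cS by simp
  then obtain T where T: "T \<subseteq> S" "card T = 3" "\<forall>r\<in>{1..l}. \<not> T \<subseteq> N r"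
    by (elim exE conjE) simp
  have r0l: "r0 \<in> {1..l}" using r0 Ijl by blast
  have "\<not> T \<subseteq> A"
  proof
    assume "T \<subseteq> A"
    then have "T \<subseteq> N r0" using AN[of r0] r0 by blast
    then show False using T(3) r0l by blast
  qed
  then obtain x where x: "x \<in> T" "x \<notin> A" by auto
  have xN: "x \<in> N i - Y" using x T(1) S_def by auto
  show ?thesis
  proof (cases "private_vertex N I j i x")
    case True
    have c2: "card {i, r0} \<le> 2" by (cases "i = r0") auto
    obtain r'' where r'': "r'' \<in> I j" "r'' \<notin> {i, r0}"
      using exists_other[of "I j" "{i,r0}"] cIj c2 by force
    define B where "B = (\<lambda>s. a s r0) ` {..j}"
    have r0I: "r0 \<in> I j" using r0 by simp
    have BNi: "B \<subseteq> N i \<inter> N r''"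
    proof
      fix y assume "y \<in> B"
      then obtain s where s: "s \<le> j" "y = a s r0" unfolding B_def by auto
      have "I j \<subseteq> I s" using run_mono[OF run] s jt by auto
      then have h: "r0 \<in> I s" "i \<in> I s" "r'' \<in> I s" using r0 r'' iI by auto
      have st: "s \<le> t" using s jt by simp
      have "a s r0 \<in> N i" using run_mem[OF run st h(1) h(2)] r0 by simp
      moreover have "a s r0 \<in> N r''" using run_mem[OF run st h(1) h(3)] r'' by simp
      ultimately show "y \<in> N i \<inter> N r''" using s by simp
    qed
    have xB: "x \<notin> B" using True r'' BNi unfolding private_vertex_def by auto
    have cardB: "card B = j + 1" unfolding B_def
      using card_image[OF run_inj[OF run l4 jt r0I]] by simp
    have "\<not> B \<subseteq> Y"
    proof
      assume "B \<subseteq> Y"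
      then have "card B \<le> card Y" using card_mono[OF finY] by blast
      then show False using cardB Ycard by simp
    qed
    then obtain w where w: "w \<in> B" "w \<notin> Y" by auto
    have wx: "w \<noteq> x" using w xB by auto
    define p where "p = {x, w}"
    have "private_pair N I j i p" unfolding private_pair_def p_def
      using wx xN w BNi True unfolding private_vertex_def by auto
    moreover have "p \<subseteq> N i - Y" using p_def xN w BNi by auto
    moreover have "\<exists>v\<in>p. private_vertex N I j i v" using True p_def by auto
    ultimately show ?thesis by blast
  next
    case False
    then obtain r where r: "r \<in> I j - {i}" "x \<in> N r" using xN unfolding private_vertex_def by auto
    have rl: "r \<in> {1..l}" using r Ijl by auto
    have "\<not> T \<subseteq> N r" using T(3) rl by blast
    then obtain y where y: "y \<in> T" "y \<notin> N r" by blast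
    have yA: "y \<notin> A" using y AN[OF r(1)] by auto
    have yN: "y \<in> N i - Y" using y yA T(1) S_def by auto
    have xy: "x \<noteq> y" using r y by auto
    have "\<not> T \<subseteq> N i" using T(3) il by blast
    then obtain c where c: "c \<in> T" "c \<notin> N i" by blast
    have cA: "c \<in> A" using c T(1) S_def by auto
    have cx: "c \<noteq> x" "c \<noteq> y" using c xN yN by auto
    have Teq: "T = {x, y, c}"
    proof -
      have sub: "{x, y, c} \<subseteq> T" using x y c by auto
      have "card {x, y, c} = 3" using xy cx by auto
      moreover have "finite T" using T(2) card_ge_0_finite by force
      ultimately show ?thesis using sub T(2) by (metis card_subset_eq)
    qed
    define p where "p = {x, y}"
    have pp: "private_pair N I j i p"
      unfolding private_pair_def
    proof (intro conjI ballI)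
      show "card p = 2" using p_def xy by auto
      show "p \<subseteq> N i" using p_def xN yN by auto
    next
      fix r' assume r': "r' \<in> I j - {i}"
      show "\<not> p \<subseteq> N r'"
      proof
        assume "p \<subseteq> N r'"
        then have "T \<subseteq> N r'" using Teq p_def cA AN[OF r'] by auto
        then show False using T(3) r' Ijl by auto
      qed
    qed
    have "T \<subseteq> (N i \<union> {a s i | s. s \<le> j}) - Y"
    proof -
      have "c \<in> {a s i | s. s \<le> j}" using cA unfolding A_def by auto
      moreover have "c \<notin> Y" using c YN by auto
      ultimately show ?thesis using Teq xN yN by auto
    qed
    moreover have "\<forall>r\<in>{1..l}. T \<inter> (V - N r) \<noteq> {}"
    proof
      fix r assume "r \<in> {1..l}"
      then have "\<not> T \<subseteq> N r" using T(3) by blast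
      moreover have "T \<subseteq> V" using T(1) SV by blast
      ultimately show "T \<inter> (V - N r) \<noteq> {}" by blast
    qed
    moreover have "p \<subseteq> T" using Teq p_def by auto
    moreover have "p \<subseteq> N i - Y" using p_def xN yN by auto
    ultimately show ?thesis using pp T(2) by blast
  qed
qed

end
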